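(* Let $\mathcal P$ be an uncertain point set in $\mathbb R^2$ with $\min_{x\in\mathbb R^2}\widehat{\mathrm{cost}}(x)>0$, let $\varepsilon\in(0,1]$, let $\varrho>0$, and let $T(\mathcal P)$ be the output of any run of the greedy covering procedure on $S(\mathcal P)$. Then $$|T(\mathcal P)|\le 3540\,|T^*(\mathcal P)|,$$ where $T^*(\mathcal P)$ is a minimum-cardinality set $T\subset\mathbb R^2$ that $\frac{\varepsilon}{2(1+\varepsilon)}$-covers $S(\mathcal P)$.
   Context: Each $P_i$ ($i=1,\dots,n$) has $k$ locations $p_{i,1},\dots,p_{i,k}\in\mathbb R^2$; $P_{\mathrm{all}}$ is the set of all locations and $CH(P_{\mathrm{all}})$ its convex hull. $\widehat{\mathrm{cost}}(x)=\frac1n\sum_i\min_j\|x-p_{i,j}\|$ (Euclidean norm). A point $a$ $\gamma$-covers a point $b$ if $\|a-b\|\le\gamma\,\widehat{\mathrm{cost}}(a)$; a set $A$ $\gamma$-covers a set $B$ if every $b\in B$ is $\gamma$-covered by some $a\in A$. $S(\mathcal P)=CH(P_{\mathrm{all}})\cap\{(\beta i,\beta j): i,j\in\mathbb Z\}$ with $\beta=\frac{\varepsilon}{2\sqrt2(1+\varepsilon)}\varrho$ (in the paper $\varrho$ is a positive lower bound on $\widehat{\mathrm{cost}}$). Greedy covering procedure: start with $S=S(\mathcal P)$ and $T=\emptyset$; while $S\ne\emptyset$, choose any $z\in S$, add $z$ to $T$, and remove from $S$ every $s$ that $z$ $\frac{\varepsilon}{2(1+\varepsilon)}$-covers; output $T$.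 *)

theory Defs
  imports "HOL-Analysis.Analysis"
begin

text \<open>An uncertain point set: n points, each with k locations p i j, for i < n, j < k.\<close>

definition cost_hat :: "nat \<Rightarrow> nat \<Rightarrow> (nat \<Rightarrow> nat \<Rightarrow> real^2) \<Rightarrow> real^2 \<Rightarrow> real" where
  "cost_hat n k p x = (1 / real n) * (\<Sum>i<n. Min ((\<lambda>j. norm (x - p i j)) ` {..<k}))"

definition P_all :: "nat \<Rightarrow> nat \<Rightarrow> (nat \<Rightarrow> nat \<Rightarrow> real^2) \<Rightarrow> (real^2) set" where
  "P_all n k p = {p i j | i j. i < n \<and> j < k}"

definition gcovers :: "nat \<Rightarrow> nat \<Rightarrow> (nat \<Rightarrow> nat \<Rightarrow> real^2) \<Rightarrow> real \<Rightarrow> real^2 \<Rightarrow> real^2 \<Rightarrow> bool" where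
  "gcovers n k p \<gamma> a b \<longleftrightarrow> norm (a - b) \<le> \<gamma> * cost_hat n k p a"

definition gcovers_set :: "nat \<Rightarrow> nat \<Rightarrow> (nat \<Rightarrow> nat \<Rightarrow> real^2) \<Rightarrow> real \<Rightarrow> (real^2) set \<Rightarrow> (real^2) set \<Rightarrow> bool" where
  "gcovers_set n k p \<gamma> A B \<longleftrightarrow> (\<forall>b\<in>B. \<exists>a\<in>A. gcovers n k p \<gamma> a b)"

definition grid_beta :: "real \<Rightarrow> real \<Rightarrow> real" where
  "grid_beta \<epsilon> \<rho> = \<epsilon> / (2 * sqrt 2 * (1 + \<epsilon>)) * \<rho>"

definition S_set :: "nat \<Rightarrow> nat \<Rightarrow> (nat \<Rightarrow> nat \<Rightarrow> real^2) \<Rightarrow> real \<Rightarrow> real \<Rightarrow> (real^2) set" where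
  "S_set n k p \<epsilon> \<rho> = convex hull (P_all n k p) \<inter>
     {vector [grid_beta \<epsilon> \<rho> * of_int i, grid_beta \<epsilon> \<rho> * of_int j] | i j :: int. True}"

text \<open>Possible outputs of a run of the greedy covering procedure started from the set S,
  with covering predicate cov (cov z s: z covers s).\<close>
inductive greedy_run :: "('a \<Rightarrow> 'a \<Rightarrow> bool) \<Rightarrow> 'a set \<Rightarrow> 'a set \<Rightarrow> bool" for cov where
  empty: "greedy_run cov {} {}"
| step: "z \<in> S \<Longrightarrow> greedy_run cov (S - {s \<in> S. cov z s}) T \<Longrightarrow> greedy_run cov S (insert z T)"

definition min_cover_card :: "nat \<Rightarrow> nat \<Rightarrow> (nat \<Rightarrow> nat \<Rightarrow> real^2) \<Rightarrow> real \<Rightarrow> (real^2) set \<Rightarrow> nat" where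
  "min_cover_card n k p \<gamma> B = (LEAST m. \<exists>T. finite T \<and> card T = m \<and> gcovers_set n k p \<gamma> T B)"

end

theory Submission
  imports Defs
begin

lemma greedy_props:
  assumes "greedy_run cov S T" and "\<And>x. cov x x"
  shows "T \<subseteq> S \<and> finite T \<and> (\<forall>s\<in>S. \<exists>z\<in>T. cov z s) \<and>
         (\<forall>a\<in>T. \<forall>b\<in>T. a \<noteq> b \<longrightarrow> \<not> cov a b \<or> \<not> cov b a)"
  using assms(1)
proof (induction rule: greedy_run.induct)
  case empty
  then show ?case by simp
next
  case (step z S T)
  let ?S' = "S - {s \<in> S. cov z s}"
  note IH = step.IH
  have a: "T \<subseteq> ?S'" using conjunct1[OF IH] .
  have b: "finite T" using conjunct1[OF conjunct2[OF IH]] .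
  have c: "\<forall>s\<in>?S'. \<exists>z\<in>T. cov z s" using conjunct1[OF conjunct2[OF conjunct2[OF IH]]] .
  have d: "\<forall>a\<in>T. \<forall>b\<in>T. a \<noteq> b \<longrightarrow> \<not> cov a b \<or> \<not> cov b a"
    using conjunct2[OF conjunct2[OF conjunct2[OF IH]]] .
  have 1: "insert z T \<subseteq> S" using a step.hyps(1) by blast
  have 2: "finite (insert z T)" using b by simp
  have 3: "\<forall>s\<in>S. \<exists>y\<in>insert z T. cov y s"
  proof
    fix s assume s: "s \<in> S"
    show "\<exists>y\<in>insert z T. cov y s"
    proof (cases "cov z s")
      case True then show ?thesis by blast
    next
      case False then have "s \<in> ?S'" using s by blast
      then show ?thesis using c by blast
    qed
  qed
  have nz: "\<not> cov z b" if "b \<in> T" for b using a that by blast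
  have 4: "\<forall>a\<in>insert z T. \<forall>b\<in>insert z T. a \<noteq> b \<longrightarrow> \<not> cov a b \<or> \<not> cov b a"
    using d nz by blast
  show ?case using 1 2 3 4 by blast
qed

lemma cost_lip:
  assumes "n \<ge> 1" "k \<ge> 1"
  shows "cost_hat n k p x \<le> cost_hat n k p y + norm (x - y)"
proof -
  have each: "Min ((\<lambda>j. norm (x - p i j)) ` {..<k}) \<le> Min ((\<lambda>j. norm (y - p i j)) ` {..<k}) + norm (x - y)" for i
  proof -
    have "0 \<in> {..<k}" using assms(2) by simp
    then have ne: "(\<lambda>j. norm (y - p i j)) ` {..<k} \<noteq> {}" by blast
    obtain j0 where j0: "j0 < k" "Min ((\<lambda>j. norm (y - p i j)) ` {..<k}) = norm (y - p i j0)"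
      using Min_in[OF _ ne] by auto
    have "Min ((\<lambda>j. norm (x - p i j)) ` {..<k}) \<le> norm (x - p i j0)"
      using j0 by (intro Min_le) auto
    also have "\<dots> \<le> norm (y - p i j0) + norm (x - y)"
      using norm_triangle_ineq[of "x - y" "y - p i j0"] by simp
    finally show ?thesis using j0 by simp
  qed
  have "(\<Sum>i<n. Min ((\<lambda>j. norm (x - p i j)) ` {..<k})) \<le> (\<Sum>i<n. Min ((\<lambda>j. norm (y - p i j)) ` {..<k}) + norm (x - y))"
    by (intro sum_mono each)
  also have "\<dots> = (\<Sum>i<n. Min ((\<lambda>j. norm (y - p i j)) ` {..<k})) + real n * norm (x - y)"
    by (simp add: sum.distrib)
  finally have "(1 / real n) * (\<Sum>i<n. Min ((\<lambda>j. norm (x - p i j)) ` {..<k})) \<le> (1 / real n) * ((\<Sum>i<n. Min ((\<lambda>j. norm (y - p i j)) ` {..<k})) + real n * norm (x - y))"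
    by (intro mult_left_mono) auto
  then show ?thesis using assms(1) unfolding cost_hat_def by (simp add: field_simps)
qed

lemma cost_nonneg: "k \<ge> 1 \<Longrightarrow> cost_hat n k p x \<ge> 0"
  unfolding cost_hat_def
proof -
  assume k1: "k \<ge> 1"
  then have "(\<Sum>i<n. Min ((\<lambda>j. norm (x - p i j)) ` {..<k})) \<ge> 0"
  proof (intro sum_nonneg)
    fix i show "0 \<le> Min ((\<lambda>j. norm (x - p i j)) ` {..<k})"
      using k1 by (cases "k = 0") (auto intro: Min.boundedI)
  qed
  then show "0 \<le> 1 / real n * (\<Sum>i<n. Min ((\<lambda>j. norm (x - p i j)) ` {..<k}))" by simp
qed

lemma packing:
  fixes F :: "(real^2) set" and t :: "real^2" and r :: real
  assumes r: "r > 0"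
    and inb: "\<And>z. z \<in> F \<Longrightarrow> norm (t - z) \<le> r"
    and sep: "\<And>a b. a \<in> F \<Longrightarrow> b \<in> F \<Longrightarrow> a \<noteq> b \<Longrightarrow> norm (a - b) > 3/4 * r"
  shows "card F \<le> 81"
proof -
  define s where "s = r / 4"
  have s: "s > 0" using r s_def by simp
  define g where "g z = (\<lfloor>(z$1 - t$1) / s\<rfloor>, \<lfloor>(z$2 - t$2) / s\<rfloor>)" for z :: "real^2"
  have rng: "g ` F \<subseteq> {-4..4} \<times> {-4..4}"
  proof
    fix w assume "w \<in> g ` F"
    then obtain z where z: "z \<in> F" "w = g z" by auto
    have c: "\<bar>z$i - t$i\<bar> \<le> r" for i
      using component_le_norm_cart[of "t - z" i] inb[OF z(1)] by (simp add: abs_minus_commute)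
    have b: "-4 \<le> (z$i - t$i) / s \<and> (z$i - t$i) / s \<le> 4" for i
      using c[of i] s r unfolding s_def by (auto simp: field_simps abs_le_iff)
    have "-4 \<le> \<lfloor>(z$i - t$i) / s\<rfloor> \<and> \<lfloor>(z$i - t$i) / s\<rfloor> \<le> 4" for i
      using b[of i] by (metis floor_mono floor_neg_numeral floor_numeral)
    then show "w \<in> {-4..4} \<times> {-4..4}" using z unfolding g_def by auto
  qed
  have inj: "inj_on g F"
  proof (rule inj_onI, rule ccontr)
    fix a b assume ab: "a \<in> F" "b \<in> F" "g a = g b" "a \<noteq> b"
    have close: "\<bar>a$i - b$i\<bar> < s" if "\<lfloor>(a$i - t$i) / s\<rfloor> = \<lfloor>(b$i - t$i) / s\<rfloor>" for i
    proof -
      let ?u = "(a$i - t$i) / s" and ?v = "(b$i - t$i) / s"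
      have "of_int \<lfloor>?u\<rfloor> \<le> ?u" "?u < of_int \<lfloor>?u\<rfloor> + 1"
           "of_int \<lfloor>?v\<rfloor> \<le> ?v" "?v < of_int \<lfloor>?v\<rfloor> + 1"
        by (simp_all add: floor_correct)
      moreover have "real_of_int \<lfloor>?u\<rfloor> = real_of_int \<lfloor>?v\<rfloor>" using that by simp
      ultimately have "?u - ?v < 1" "?v - ?u < 1" by linarith+
      then have "\<bar>?u - ?v\<bar> < 1" by (simp add: abs_less_iff)
      moreover have "?u - ?v = (a$i - b$i) / s" by (simp add: diff_divide_distrib)
      ultimately have "\<bar>a$i - b$i\<bar> / s < 1" using s by simp
      then show ?thesis using s by (simp add: divide_less_eq)
    qed
    have c1: "\<bar>(a - b)$1\<bar> < s" using close[of 1] ab(3) unfolding g_def by simp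
    have c2: "\<bar>(a - b)$2\<bar> < s" using close[of 2] ab(3) unfolding g_def by simp
    have "norm (a - b) \<le> (\<Sum>i\<in>UNIV. \<bar>(a - b)$i\<bar>)" by (rule norm_le_l1_cart)
    also have "\<dots> = \<bar>(a - b)$1\<bar> + \<bar>(a - b)$2\<bar>" by (simp add: UNIV_2)
    finally have "norm (a - b) < 2 * s" using c1 c2 by simp
    then show False using sep[OF ab(1,2,4)] s_def r by simp
  qed
  have "card F = card (g ` F)" using inj by (simp add: card_image)
  also have "\<dots> \<le> card ({-4..4::int} \<times> {-4..4::int})" by (intro card_mono rng) auto
  also have "\<dots> = 81" by (simp add: card_cartesian_product)
  finally show ?thesis .
qed


theorem mainTheorem12:
  fixes n k :: nat and p :: "nat \<Rightarrow> nat \<Rightarrow> real^2" and \<epsilon> \<rho> :: real and T :: "(real^2) set"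
  assumes "n \<ge> 1" and "k \<ge> 1"
    and "\<exists>x0. (\<forall>x. cost_hat n k p x0 \<le> cost_hat n k p x) \<and> cost_hat n k p x0 > 0"
    and "0 < \<epsilon>" and "\<epsilon> \<le> 1" and "0 < \<rho>"
    and "greedy_run (gcovers n k p (\<epsilon> / (2 * (1 + \<epsilon>)))) (S_set n k p \<epsilon> \<rho>) T"
  shows "real (card T) \<le> 3540 * real (min_cover_card n k p (\<epsilon> / (2 * (1 + \<epsilon>))) (S_set n k p \<epsilon> \<rho>))"
proof -
  define \<gamma> where "\<gamma> = \<epsilon> / (2 * (1 + \<epsilon>))"
  define S where "S = S_set n k p \<epsilon> \<rho>"
  define c where "c = cost_hat n k p"
  have g0: "\<gamma> > 0" using assms(4) unfolding \<gamma>_def by simp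
  have g1: "\<gamma> \<le> 1/4" using assms(4,5) unfolding \<gamma>_def by (simp add: field_simps)
  obtain x0 where x0: "\<And>x. c x0 \<le> c x" "c x0 > 0" using assms(3) unfolding c_def by blast
  have cpos: "c x > 0" for x using x0(1)[of x] x0(2) by linarith
  have crefl: "gcovers n k p \<gamma> x x" for x
  proof -
    have "0 \<le> \<gamma> * cost_hat n k p x" using cost_nonneg[OF assms(2), of n p x] g0 by simp
    then show ?thesis unfolding gcovers_def by simp
  qed
  have gr: "greedy_run (gcovers n k p \<gamma>) S T" using assms(7) unfolding \<gamma>_def S_def .
  note gp = greedy_props[OF gr crefl]
  have TS: "T \<subseteq> S" using conjunct1[OF gp] .
  have finT: "finite T" using conjunct1[OF conjunct2[OF gp]] .
  have covS: "\<forall>s\<in>S. \<exists>z\<in>T. gcovers n k p \<gamma> z s" using conjunct1[OF conjunct2[OF conjunct2[OF gp]]] .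
  have sepT: "\<forall>a\<in>T. \<forall>b\<in>T. a \<noteq> b \<longrightarrow> \<not> gcovers n k p \<gamma> a b \<or> \<not> gcovers n k p \<gamma> b a"
    using conjunct2[OF conjunct2[OF conjunct2[OF gp]]] .
  define m where "m = min_cover_card n k p \<gamma> S"
  have ex: "\<exists>m T'. finite T' \<and> card T' = m \<and> gcovers_set n k p \<gamma> T' S"
    using finT covS unfolding gcovers_set_def by (intro exI[of _ "card T"] exI[of _ T]) simp
  have "\<exists>T'. finite T' \<and> card T' = m \<and> gcovers_set n k p \<gamma> T' S"
    unfolding m_def min_cover_card_def using ex by (rule LeastI_ex)
  then obtain Ts where Ts: "finite Ts" "card Ts = m" "gcovers_set n k p \<gamma> Ts S" by blast
  define F where "F t = {z\<in>T. gcovers n k p \<gamma> t z}" for t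
  have sub: "T \<subseteq> (\<Union>t\<in>Ts. F t)"
    using Ts(3) TS unfolding gcovers_set_def F_def by blast
  have fin_un: "finite (\<Union>t\<in>Ts. F t)" using Ts(1) finT unfolding F_def by auto
  have Fb: "card (F t) \<le> 81" for t
  proof (rule packing[where t = t and r = "\<gamma> * c t"])
    show "\<gamma> * c t > 0" using g0 cpos by simp
    show "norm (t - z) \<le> \<gamma> * c t" if "z \<in> F t" for z
      using that unfolding F_def gcovers_def c_def by simp
    have lower: "c a \<ge> 3/4 * c t" if "a \<in> F t" for a
    proof -
      have "norm (t - a) \<le> \<gamma> * c t" using that unfolding F_def gcovers_def c_def by simp
      moreover have "c t \<le> c a + norm (t - a)" unfolding c_def by (rule cost_lip[OF assms(1,2)])
      moreover have "\<gamma> * c t \<le> 1/4 * c t" using g1 cpos[of t] by (intro mult_right_mono) auto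
      ultimately show ?thesis by linarith
    qed
    show "norm (a - b) > 3/4 * (\<gamma> * c t)" if ab: "a \<in> F t" "b \<in> F t" "a \<noteq> b" for a b
    proof -
      have "a \<in> T" "b \<in> T" using ab unfolding F_def by auto
      then have "\<not> gcovers n k p \<gamma> a b \<or> \<not> gcovers n k p \<gamma> b a" using sepT ab(3) by blast
      then show ?thesis
      proof
        assume "\<not> gcovers n k p \<gamma> a b"
        then have "norm (a - b) > \<gamma> * c a" unfolding gcovers_def c_def by simp
        moreover have "\<gamma> * c a \<ge> \<gamma> * (3/4 * c t)" using lower[OF ab(1)] g0 by (intro mult_left_mono) auto
        ultimately show ?thesis by simp
      next
        assume "\<not> gcovers n k p \<gamma> b a"
        then have "norm (b - a) > \<gamma> * c b" unfolding gcovers_def c_def by simp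
        moreover have "\<gamma> * c b \<ge> \<gamma> * (3/4 * c t)" using lower[OF ab(2)] g0 by (intro mult_left_mono) auto
        ultimately show ?thesis by (simp add: norm_minus_commute)
      qed
    qed
  qed
  have "card T \<le> card (\<Union>t\<in>Ts. F t)" by (rule card_mono[OF fin_un sub])
  also have "\<dots> \<le> (\<Sum>t\<in>Ts. card (F t))" by (rule card_UN_le[OF Ts(1)])
  also have "\<dots> \<le> (\<Sum>t\<in>Ts. 81)" by (intro sum_mono Fb)
  also have "\<dots> = 81 * m" using Ts(2) by simp
  finally have "card T \<le> 81 * m" .
  then have "real (card T) \<le> 81 * real m" by linarith
  also have "\<dots> \<le> 3540 * real m" by simp
  finally show ?thesis unfolding m_def \<gamma>_def S_def .
qed

end
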